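(* Let $\Omega\subset\mathbb{R}^2$ be compact with non-empty interior. For every $h>0$, every solid angle center of $\Omega$ of height $h$ belongs to the minimal unfolded region $uf(\Omega)$.
   Context: For a compact $\Omega\subset\mathbb{R}^2$ with non-empty interior, $h>0$ and $x\in\mathbb{R}^2$, $A_\Omega^{(h)}(x)=\int_\Omega \frac{h}{(|y-x|^2+h^2)^{3/2}}\,dy$. A point $x$ is a solid angle center of $\Omega$ of height $h$ if it maximizes $A_\Omega^{(h)}$ over $\mathbb{R}^2$. Minimal unfolded region: for a unit vector $v\in S^1$ and $c\in\mathbb{R}$, let $I_{v,c}$ be the reflection of $\mathbb{R}^2$ in the line $\{z: z\cdot v=c\}$; let $\Omega^+_{v,a}=\Omega\cap\{z: z\cdot v\ge a\}$ and $\Omega^-_{v,a}=\Omega\cap\{z: z\cdot v\le a\}$. Put $u(v)=\inf\{b\in\mathbb{R}: I_{v,c}(\Omega^+_{v,c})\subset\Omega \text{ for all } c\ge b\}$ and $l(v)=\sup\{b\in\mathbb{R}: I_{v,c}(\Omega^-_{v,c})\subset\Omega \text{ for all } c\le b\}$. Then $uf(\Omega)=\bigcap_{v\in S^1}\{z\in\mathbb{R}^2: l(v)\le z\cdot v\le u(v)\}$. *)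

theory Defs
  imports "HOL-Analysis.Analysis"
begin

definition solid_angle :: "(real^2) set \<Rightarrow> real \<Rightarrow> real^2 \<Rightarrow> real" where
  "solid_angle \<Omega> h x =
     integral \<Omega> (\<lambda>y. h / ((norm (y - x))\<^sup>2 + h\<^sup>2) powr (3/2))"

definition solid_angle_center :: "(real^2) set \<Rightarrow> real \<Rightarrow> real^2 \<Rightarrow> bool" where
  "solid_angle_center \<Omega> h x \<longleftrightarrow> (\<forall>y. solid_angle \<Omega> h y \<le> solid_angle \<Omega> h x)"

text \<open>Reflection in the line {z. z \<bullet> v = c} (v a unit vector).\<close>
definition refl_line :: "real^2 \<Rightarrow> real \<Rightarrow> real^2 \<Rightarrow> real^2" where
  "refl_line v c z = z - (2 * (z \<bullet> v - c)) *\<^sub>R v"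

definition cap_plus :: "(real^2) set \<Rightarrow> real^2 \<Rightarrow> real \<Rightarrow> (real^2) set" where
  "cap_plus \<Omega> v a = \<Omega> \<inter> {z. z \<bullet> v \<ge> a}"

definition cap_minus :: "(real^2) set \<Rightarrow> real^2 \<Rightarrow> real \<Rightarrow> (real^2) set" where
  "cap_minus \<Omega> v a = \<Omega> \<inter> {z. z \<bullet> v \<le> a}"

definition uf_upper :: "(real^2) set \<Rightarrow> real^2 \<Rightarrow> real" where
  "uf_upper \<Omega> v = Inf {b. \<forall>c\<ge>b. refl_line v c ` cap_plus \<Omega> v c \<subseteq> \<Omega>}"

definition uf_lower :: "(real^2) set \<Rightarrow> real^2 \<Rightarrow> real" where
  "uf_lower \<Omega> v = Sup {b. \<forall>c\<le>b. refl_line v c ` cap_minus \<Omega> v c \<subseteq> \<Omega>}"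

definition min_unfolded_region :: "(real^2) set \<Rightarrow> (real^2) set" where
  "min_unfolded_region \<Omega> =
     (\<Inter>v\<in>{v. norm v = 1}. {z. uf_lower \<Omega> v \<le> z \<bullet> v \<and> z \<bullet> v \<le> uf_upper \<Omega> v})"

end

theory Submission imports Defs begin

lemma refl_inner: "norm v = 1 \<Longrightarrow> refl_line v c z \<bullet> v = 2*c - z \<bullet> v"
  unfolding refl_line_def by (simp add: inner_diff_left norm_eq_1 algebra_simps)

lemma refl_invol: "norm v = 1 \<Longrightarrow> refl_line v c (refl_line v c z) = z"
proof -
  assume v: "norm v = 1"
  have "refl_line v c (refl_line v c z) = refl_line v c z - (2*(refl_line v c z \<bullet> v - c)) *\<^sub>R v"
    unfolding refl_line_def[of v c "refl_line v c z"] ..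
  also have "\<dots> = refl_line v c z - (2*(c - z \<bullet> v)) *\<^sub>R v"
    using refl_inner[OF v, of c z] by simp
  also have "\<dots> = z - (2*(z \<bullet> v - c)) *\<^sub>R v - (2*(c - z \<bullet> v)) *\<^sub>R v"
    unfolding refl_line_def ..
  also have "\<dots> = z - ((2*(z \<bullet> v - c)) + (2*(c - z \<bullet> v))) *\<^sub>R v"
    by (simp only: scaleR_add_left diff_diff_eq)
  also have "\<dots> = z" by simp
  finally show ?thesis .
qed

lemma refl_norm_lin: "norm v = 1 \<Longrightarrow> norm (w - (2*(w \<bullet> v)) *\<^sub>R v) = norm w"
proof -
  assume v: "norm v = 1"
  hence vv: "v \<bullet> v = 1" by (simp add: norm_eq_1)
  have "(norm (w - (2*(w \<bullet> v)) *\<^sub>R v))^2 = w \<bullet> w - 4*(w\<bullet>v)^2 + 4*(w\<bullet>v)^2*(v\<bullet>v)"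
    unfolding power2_norm_eq_inner
    by (simp add: inner_diff_left inner_diff_right inner_commute power2_eq_square algebra_simps)
  also have "\<dots> = (norm w)^2" using vv by (simp add: power2_norm_eq_inner)
  finally show ?thesis by simp
qed

lemma refl_iso: "norm v = 1 \<Longrightarrow> norm (refl_line v c y - refl_line v c z) = norm (y - z)"
proof -
  assume v: "norm v = 1"
  have "refl_line v c y - refl_line v c z = (y - z) - (2 * ((y - z) \<bullet> v)) *\<^sub>R v"
    unfolding refl_line_def by (simp add: inner_diff_left algebra_simps)
  thus ?thesis using refl_norm_lin[OF v] by simp
qed

lemma refl_sym: "norm v = 1 \<Longrightarrow> norm (refl_line v c y - x) = norm (y - refl_line v c x)"
  by (metis refl_invol refl_iso)

lemma refl_dist_sq: "norm v = 1 \<Longrightarrow>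
   (norm (y - refl_line v c x))^2 = (norm (y - x))^2 + 4*(x \<bullet> v - c)*(y \<bullet> v - c)"
proof -
  assume v: "norm v = 1"
  hence vv: "v \<bullet> v = 1" by (simp add: norm_eq_1)
  have "y - refl_line v c x = (y - x) + (2*(x \<bullet> v - c)) *\<^sub>R v" unfolding refl_line_def by simp
  hence "(norm (y - refl_line v c x))^2 = (norm ((y - x) + (2*(x \<bullet> v - c)) *\<^sub>R v))^2" by (simp only:)
  also have "\<dots> = (y-x)\<bullet>(y-x) + 4*(x \<bullet> v - c)*((y-x)\<bullet>v) + 4*(x \<bullet> v - c)^2*(v\<bullet>v)"
    unfolding power2_norm_eq_inner
    by (simp add: inner_add_left inner_add_right inner_commute power2_eq_square algebra_simps)
  also have "\<dots> = (norm (y - x))^2 + 4*(x \<bullet> v - c)*(y \<bullet> v - c)"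
    using vv unfolding power2_norm_eq_inner by (simp add: inner_diff_left power2_eq_square algebra_simps)
  finally show ?thesis .
qed


lemma abs_int_cont:
  fixes f :: "real^2 \<Rightarrow> 'b::euclidean_space"
  assumes "compact S" "continuous_on UNIV f"
  shows "f absolutely_integrable_on S"
proof -
  obtain a where a: "S \<subseteq> cbox (-a) a"
    using bounded_subset_cbox_symmetric compact_imp_bounded assms(1) by blast
  have "f absolutely_integrable_on cbox (-a) a"
    by (rule absolutely_integrable_continuous) (meson assms(2) continuous_on_subset top_greatest)
  moreover have "S \<in> sets lebesgue"
    using lmeasurable_compact[OF assms(1)] by (simp add: fmeasurableD)
  ultimately show ?thesis using a set_integrable_subset by blast
qed

lemma refl_orth: "norm v = 1 \<Longrightarrow> orthogonal_transformation (refl_line v 0)"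
proof -
  assume v: "norm v = 1"
  have "refl_line v 0 0 = 0" by (simp add: refl_line_def)
  thus ?thesis unfolding orthogonal_transformation_isometry dist_norm by (simp add: refl_iso v)
qed

lemma refl_affine: "refl_line v c z = refl_line v 0 z + (2*c) *\<^sub>R v"
  unfolding refl_line_def by (simp add: algebra_simps)

lemma refl_deriv: "norm v = 1 \<Longrightarrow> (refl_line v c has_derivative refl_line v 0) F"
proof -
  assume v: "norm v = 1"
  have "linear (refl_line v 0)" using refl_orth[OF v] orthogonal_transformation_linear by blast
  hence bl: "bounded_linear (refl_line v 0)" using linear_conv_bounded_linear by blast
  have "((\<lambda>z. refl_line v 0 z + (2*c) *\<^sub>R v) has_derivative refl_line v 0) F"
    by (rule has_derivative_add_const) (rule bounded_linear_imp_has_derivative[OF bl])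
  thus ?thesis by (simp add: refl_affine[symmetric])
qed

lemma refl_cont: "continuous_on A (refl_line v c)"
  unfolding refl_line_def by (intro continuous_intros)

lemma integral_refl:
  fixes g :: "real^2 \<Rightarrow> real"
  assumes v: "norm v = 1" and S: "compact S" and g: "continuous_on UNIV g"
  shows "integral (refl_line v c ` S) g = integral S (\<lambda>z. g (refl_line v c z))"
proof -
  let ?f = "\<lambda>y. vec (g y) :: real^1"
  have "continuous_on UNIV (vec :: real \<Rightarrow> real^1)"
    using linear_continuous_on linear_conv_bounded_linear linear_vec by blast
  hence fc: "continuous_on UNIV ?f" using continuous_on_compose2[OF _ g] by blast
  have cS: "compact (refl_line v c ` S)" by (rule compact_continuous_image[OF refl_cont S])
  have ai: "?f absolutely_integrable_on (refl_line v c ` S)" by (rule abs_int_cont[OF cS fc])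
  have inj: "inj_on (refl_line v c) S" by (metis inj_on_inverseI refl_invol v)
  have "integral (refl_line v c ` S) ?f = integral S (\<lambda>x. \<bar>det (matrix (refl_line v 0))\<bar> *\<^sub>R ?f (refl_line v c x))"
    by (rule integral_change_of_variables[where g' = "\<lambda>_. refl_line v 0"])
       (use lmeasurable_compact[OF S] fmeasurableD refl_deriv[OF v] inj ai in auto)
  also have "\<dots> = integral S (\<lambda>x. ?f (refl_line v c x))"
    using refl_orth[OF v] by simp
  finally have eq: "integral (refl_line v c ` S) ?f $ 1 = integral S (\<lambda>x. ?f (refl_line v c x)) $ 1" by simp
  have fc2: "continuous_on UNIV (\<lambda>x. ?f (refl_line v c x))"
    by (intro continuous_on_compose2[OF fc refl_cont]) auto
  have i1: "?f integrable_on (refl_line v c ` S)" using ai absolutely_integrable_on_def by blast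
  have i2: "(\<lambda>x. ?f (refl_line v c x)) integrable_on S"
    using abs_int_cont[OF S fc2] absolutely_integrable_on_def by blast
  show ?thesis using eq integral_component_eq_cart[OF i1, of 1, symmetric] integral_component_eq_cart[OF i2, of 1, symmetric]
    by simp
qed


definition kern :: "real \<Rightarrow> real^2 \<Rightarrow> real" where
  "kern h w = h / ((norm w)\<^sup>2 + h\<^sup>2) powr (3/2)"

lemma solid_angle_kern: "solid_angle \<Omega> h x = integral \<Omega> (\<lambda>y. kern h (y - x))"
  unfolding solid_angle_def kern_def ..

lemma kern_cont: "h > 0 \<Longrightarrow> continuous_on UNIV (\<lambda>y. kern h (y - x))"
  unfolding kern_def
  by (intro continuous_intros) (auto simp: add_nonneg_pos add_pos_nonneg)

lemma kern_less: assumes "h > 0" "(norm a)\<^sup>2 < (norm b)\<^sup>2" shows "kern h b < kern h a"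
proof -
  have p: "0 < (norm a)\<^sup>2 + h\<^sup>2" using assms by (simp add: add_nonneg_pos)
  have "((norm a)\<^sup>2 + h\<^sup>2) powr (3/2) < ((norm b)\<^sup>2 + h\<^sup>2) powr (3/2)"
    by (rule powr_less_mono2) (use assms p in auto)
  moreover have "0 < ((norm a)\<^sup>2 + h\<^sup>2) powr (3/2)" using p assms(1) by simp
  ultimately show ?thesis unfolding kern_def using assms(1)
    by (simp add: divide_strict_left_mono)
qed

lemma kern_norm_eq: "norm a = norm b \<Longrightarrow> kern h a = kern h b"
  unfolding kern_def by simp

lemma strict_step:
  fixes \<Omega> :: "(real^2) set"
  assumes cpt: "compact \<Omega>" and h: "h > 0" and v: "norm v = 1" and cx: "c < x \<bullet> v"
    and R: "\<And>y. y \<in> \<Omega> \<Longrightarrow> c \<le> y \<bullet> v \<Longrightarrow> refl_line v c y \<in> \<Omega>"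
    and y0: "y0 \<in> interior \<Omega>" "y0 \<bullet> v < c" "refl_line v c y0 \<notin> \<Omega>"
  shows "solid_angle \<Omega> h x < solid_angle \<Omega> h (refl_line v c x)"
proof -
  define I where "I = refl_line v c"
  define x' where "x' = I x"
  define g where "g y = kern h (y - x) - kern h (y - x')" for y
  have gc: "continuous_on UNIV g" unfolding g_def
    by (intro continuous_on_diff kern_cont h)
  have cJ: "compact (I ` \<Omega>)" unfolding I_def by (rule compact_continuous_image[OF refl_cont cpt])
  have ig: "g integrable_on \<Omega>" using abs_int_cont[OF cpt gc] absolutely_integrable_on_def by blast
  have igJ: "g integrable_on (I ` \<Omega>)" using abs_int_cont[OF cJ gc] absolutely_integrable_on_def by blast
  have i1: "(\<lambda>y. kern h (y - x)) integrable_on \<Omega>"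
    using abs_int_cont[OF cpt kern_cont[OF h]] absolutely_integrable_on_def by blast
  have i2: "(\<lambda>y. kern h (y - x')) integrable_on \<Omega>"
    using abs_int_cont[OF cpt kern_cont[OF h]] absolutely_integrable_on_def by blast
  have Adiff: "solid_angle \<Omega> h x - solid_angle \<Omega> h x' = integral \<Omega> g"
    unfolding solid_angle_kern g_def using integral_diff[OF i1 i2] by simp
  have gI: "g (I z) = - g z" for z
  proof -
    have "kern h (I z - x) = kern h (z - x')"
      unfolding I_def x'_def by (rule kern_norm_eq) (simp add: refl_sym v)
    moreover have "kern h (I z - x') = kern h (z - x)"
      unfolding I_def x'_def by (rule kern_norm_eq) (simp add: refl_iso v)
    ultimately show ?thesis unfolding g_def by simp
  qed
  have "integral (I ` \<Omega>) g = integral \<Omega> (\<lambda>z. g (I z))"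
    unfolding I_def by (rule integral_refl[OF v cpt gc])
  also have "\<dots> = - integral \<Omega> g" by (simp add: gI integral_neg ig)
  finally have intJ: "integral (I ` \<Omega>) g = - integral \<Omega> g" .
  define F where "F y = (if y \<in> \<Omega> then g y else 0) - (if y \<in> I ` \<Omega> then g y else 0)" for y
  have iF1: "(\<lambda>y. if y \<in> \<Omega> then g y else 0) integrable_on UNIV" using ig integrable_restrict_UNIV by blast
  have iF2: "(\<lambda>y. if y \<in> I ` \<Omega> then g y else 0) integrable_on UNIV" using igJ integrable_restrict_UNIV by blast
  have iF: "F integrable_on UNIV" unfolding F_def using integrable_diff[OF iF1 iF2] .
  have intF: "integral UNIV F = 2 * integral \<Omega> g"
    unfolding F_def integral_diff[OF iF1 iF2] integral_restrict_UNIV intJ by simp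
  have gsq: "(norm (y - x'))\<^sup>2 = (norm (y - x))\<^sup>2 + 4*(x \<bullet> v - c)*(y \<bullet> v - c)" for y
    unfolding x'_def I_def by (rule refl_dist_sq[OF v])
  have gpos: "g y \<ge> 0" if "y \<bullet> v \<ge> c" for y
  proof (cases "y \<bullet> v = c")
    case True thus ?thesis unfolding g_def using kern_norm_eq[of "y - x" "y - x'" h] gsq[of y]
      by (simp add: power2_eq_iff_nonneg)
  next
    case False
    hence "(norm (y - x))\<^sup>2 < (norm (y - x'))\<^sup>2" using gsq[of y] that cx by (simp add: mult_pos_pos)
    thus ?thesis using kern_less[OF h] unfolding g_def by fastforce
  qed
  have gneg: "g y < 0" if "y \<bullet> v < c" for y
  proof -
    have "4*(x \<bullet> v - c)*(y \<bullet> v - c) < 0" using that cx by (simp add: mult_pos_neg)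
    hence "(norm (y - x'))\<^sup>2 < (norm (y - x))\<^sup>2" using gsq[of y] by simp
    thus ?thesis using kern_less[OF h] unfolding g_def by fastforce
  qed
  have Fle: "F y \<le> 0" for y
  proof (cases "y \<bullet> v \<ge> c")
    case True
    hence "y \<in> \<Omega> \<Longrightarrow> y \<in> I ` \<Omega>" using R refl_invol[OF v] unfolding I_def by (metis image_eqI)
    thus ?thesis unfolding F_def using gpos[OF True] by auto
  next
    case False
    hence yl: "y \<bullet> v < c" by simp
    have "y \<in> I ` \<Omega> \<Longrightarrow> y \<in> \<Omega>"
    proof -
      assume "y \<in> I ` \<Omega>"
      then obtain z where z: "z \<in> \<Omega>" "y = I z" by blast
      have "z \<bullet> v = 2*c - y \<bullet> v" using z(2) refl_inner[OF v, of c z] unfolding I_def by simp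
      hence "c \<le> z \<bullet> v" using yl by simp
      hence "I z \<in> \<Omega>" using R z(1) unfolding I_def by blast
      thus "y \<in> \<Omega>" using z by simp
    qed
    thus ?thesis unfolding F_def using gneg[OF yl] by auto
  qed
  define W where "W = interior \<Omega> \<inter> (- (I ` \<Omega>)) \<inter> {y. y \<bullet> v < c} \<inter> {y. g y < g y0 / 2}"
  have gy0: "g y0 < 0" using gneg[OF y0(2)] .
  have "y0 \<notin> I ` \<Omega>"
  proof
    assume "y0 \<in> I ` \<Omega>"
    then obtain z where "z \<in> \<Omega>" "y0 = I z" by blast
    hence "I y0 \<in> \<Omega>" using refl_invol[OF v] unfolding I_def by simp
    thus False using y0(3) unfolding I_def by simp
  qed
  hence y0W: "y0 \<in> W" unfolding W_def using y0 gy0 by auto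
  have o1: "open {y. y \<bullet> v < c}" using open_halfspace_lt[of v c] by (simp add: inner_commute)
  have o2: "open {y. g y < g y0 / 2}" by (rule open_Collect_less[OF gc continuous_on_const])
  have o3: "open (- (I ` \<Omega>))" using cJ compact_imp_closed open_Compl by blast
  have oW: "open W" unfolding W_def using o1 o2 o3 by (intro open_Int open_interior)
  obtain a b where ab: "cbox a b \<subseteq> W" "y0 \<in> box a b" "\<forall>i\<in>Basis. a \<bullet> i < b \<bullet> i"
    using open_contains_cbox[OF oW y0W] by blast
  define G where "G y = (if y \<in> cbox a b then g y0 / 2 else 0)" for y
  have iG: "G integrable_on UNIV" unfolding G_def
    by (rule integrable_restrict_UNIV[THEN iffD2]) (rule integrable_const)
  have intG: "integral UNIV G = measure lborel (cbox a b) * (g y0 / 2)"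
    unfolding G_def integral_restrict_UNIV by simp
  have FG: "F y \<le> G y" for y
  proof (cases "y \<in> cbox a b")
    case True
    hence "y \<in> W" using ab by blast
    hence "y \<in> \<Omega>" "y \<notin> I ` \<Omega>" "g y < g y0 / 2" unfolding W_def using interior_subset by auto
    thus ?thesis unfolding F_def G_def using True by simp
  next
    case False thus ?thesis unfolding G_def using Fle by simp
  qed
  have "integral UNIV F \<le> integral UNIV G" by (rule integral_le[OF iF iG]) (use FG in auto)
  also have "\<dots> < 0" unfolding intG using content_pos_lt[OF ab(3)] gy0
    by (simp add: mult_pos_neg)
  finally have "integral \<Omega> g < 0" using intF by simp
  thus ?thesis using Adiff unfolding x'_def I_def by simp
qed


lemma upper_bound:
  fixes \<Omega> :: "(real^2) set"
  assumes cpt: "compact \<Omega>" and ne: "interior \<Omega> \<noteq> {}" and h: "h > 0"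
    and ctr: "solid_angle_center \<Omega> h x" and v: "norm v = 1"
  shows "x \<bullet> v \<le> uf_upper \<Omega> v"
proof (rule ccontr)
  assume "\<not> x \<bullet> v \<le> uf_upper \<Omega> v"
  hence ux: "uf_upper \<Omega> v < x \<bullet> v" by simp
  define S where "S = {b. \<forall>c\<ge>b. refl_line v c ` cap_plus \<Omega> v c \<subseteq> \<Omega>}"
  obtain B where B: "\<And>z. z \<in> \<Omega> \<Longrightarrow> norm z \<le> B"
    using compact_imp_bounded[OF cpt] bounded_iff by blast
  have zvB: "z \<bullet> v \<le> B" if "z \<in> \<Omega>" for z
    using norm_cauchy_schwarz[of z v] B[OF that] v by simp
  have "B + 1 \<in> S" unfolding S_def cap_plus_def
  proof (intro CollectI allI impI)
    fix c assume "B + 1 \<le> c"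
    hence "\<Omega> \<inter> {z. c \<le> z \<bullet> v} = {}" using zvB by force
    thus "refl_line v c ` (\<Omega> \<inter> {z. c \<le> z \<bullet> v}) \<subseteq> \<Omega>" by simp
  qed
  hence Sne: "S \<noteq> {}" by blast
  have good: "refl_line v c y \<in> \<Omega>" if cc: "uf_upper \<Omega> v < c" "y \<in> \<Omega>" "c \<le> y \<bullet> v" for c y
  proof -
    obtain b where "b \<in> S" "b < c" using cInf_lessD[OF Sne] cc(1) unfolding uf_upper_def S_def by blast
    hence "refl_line v c ` cap_plus \<Omega> v c \<subseteq> \<Omega>" unfolding S_def by auto
    thus ?thesis using cc(2,3) unfolding cap_plus_def by blast
  qed
  define U where "U = interior \<Omega>"
  have inv: "refl_line v c ` U \<subseteq> U" if c1: "uf_upper \<Omega> v < c" "c < x \<bullet> v" for c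
  proof -
    have sub: "refl_line v c ` U \<subseteq> \<Omega>"
    proof
      fix w assume "w \<in> refl_line v c ` U"
      then obtain y where y: "y \<in> U" "w = refl_line v c y" by blast
      show "w \<in> \<Omega>"
      proof (cases "c \<le> y \<bullet> v")
        case True thus ?thesis using good[OF c1(1)] y interior_subset unfolding U_def by blast
      next
        case False
        show ?thesis
        proof (rule ccontr)
          assume "w \<notin> \<Omega>"
          hence "solid_angle \<Omega> h x < solid_angle \<Omega> h (refl_line v c x)"
            using strict_step[OF cpt h v c1(2) good[OF c1(1)], of y] y False unfolding U_def by auto
          thus False using ctr unfolding solid_angle_center_def by (meson not_le)
        qed
      qed
    qed
    have eq: "refl_line v c ` U = refl_line v c -` U"
      using refl_invol[OF v] by (auto simp: image_iff) (metis)
    have "open (refl_line v c -` U)" unfolding U_def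
      by (rule open_vimage[OF open_interior]) (rule refl_cont)
    hence "open (refl_line v c ` U)" by (simp only: eq)
    hence "refl_line v c ` U \<subseteq> interior \<Omega>" using sub interior_maximal by blast
    thus ?thesis unfolding U_def .
  qed
  define u where "u = uf_upper \<Omega> v"
  define c1 where "c1 = u + (x \<bullet> v - u) / 3"
  define c2 where "c2 = u + 2 * (x \<bullet> v - u) / 3"
  have c1p: "u < c1" "c1 < x \<bullet> v" and c2p: "u < c2" "c2 < x \<bullet> v" and c12: "c1 < c2"
    using ux unfolding u_def c1_def c2_def by (auto simp: field_simps)
  define s where "s = Sup ((\<lambda>z. z \<bullet> v) ` U)"
  have Une: "U \<noteq> {}" using ne unfolding U_def .
  have bdd: "bdd_above ((\<lambda>z. z \<bullet> v) ` U)"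
    unfolding bdd_above_def using zvB interior_subset unfolding U_def by blast
  have "s - 2*(c2 - c1) < s" using c12 by simp
  then obtain p where p: "p \<in> U" "s - 2*(c2 - c1) < p \<bullet> v"
    unfolding s_def using less_cSup_iff[of "(\<lambda>z. z \<bullet> v) ` U"] Une bdd by auto
  define q where "q = refl_line v c2 (refl_line v c1 p)"
  have "q \<in> U" unfolding q_def using inv[OF c1p[unfolded u_def]] inv[OF c2p[unfolded u_def]] p(1) by blast
  hence "q \<bullet> v \<le> s" unfolding s_def using bdd by (simp add: cSup_upper)
  moreover have "q \<bullet> v = p \<bullet> v + 2*(c2 - c1)" unfolding q_def using refl_inner[OF v] by simp
  ultimately show False using p(2) by simp
qed

lemma refl_neg: "refl_line (-v) (-c) = refl_line v c"
  unfolding refl_line_def by (rule ext) (simp add: algebra_simps)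

lemma lower_eq: "uf_lower \<Omega> v = - uf_upper \<Omega> (-v)"
proof -
  define A where "A = {b. \<forall>c\<le>b. refl_line v c ` cap_minus \<Omega> v c \<subseteq> \<Omega>}"
  define B where "B = {b. \<forall>c\<ge>b. refl_line (-v) c ` cap_plus \<Omega> (-v) c \<subseteq> \<Omega>}"
  have cm: "cap_minus \<Omega> v c = cap_plus \<Omega> (-v) (-c)" for c
    unfolding cap_minus_def cap_plus_def by auto
  have "B = uminus ` A"
  proof (rule set_eqI)
    fix b
    have rc: "refl_line (-v) c ` cap_plus \<Omega> (-v) c = refl_line v (-c) ` cap_minus \<Omega> v (-c)" for c
      using refl_neg[of v "-c"] cm[of "-c"] by simp
    define P where "P c = (refl_line v c ` cap_minus \<Omega> v c \<subseteq> \<Omega>)" for c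
    have "b \<in> B \<longleftrightarrow> (\<forall>c\<ge>b. P (-c))" unfolding B_def rc P_def by simp
    also have "\<dots> \<longleftrightarrow> (\<forall>c\<le>-b. P c)"
      by (metis minus_le_iff minus_minus)
    finally have "b \<in> B \<longleftrightarrow> (\<forall>c\<le>-b. refl_line v c ` cap_minus \<Omega> v c \<subseteq> \<Omega>)"
      unfolding P_def .
    also have "\<dots> \<longleftrightarrow> -b \<in> A" unfolding A_def by simp
    finally show "b \<in> B \<longleftrightarrow> b \<in> uminus ` A" by (auto simp: image_iff) (metis minus_minus)
  qed
  hence "uf_upper \<Omega> (-v) = Inf (uminus ` A)" unfolding uf_upper_def B_def by simp
  also have "\<dots> = - Sup A" unfolding Inf_real_def by (simp add: image_image)
  finally show ?thesis unfolding uf_lower_def A_def by simp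
qed

theorem theorem2p5:
  fixes \<Omega> :: "(real^2) set" and h :: real and x :: "real^2"
  assumes "compact \<Omega>" and "interior \<Omega> \<noteq> {}" and "h > 0"
    and "solid_angle_center \<Omega> h x"
  shows "x \<in> min_unfolded_region \<Omega>"
  unfolding min_unfolded_region_def
proof (intro InterI ballI, clarsimp)
  fix v :: "real^2" assume v: "norm v = 1"
  have "x \<bullet> v \<le> uf_upper \<Omega> v" by (rule upper_bound[OF assms v])
  moreover have "x \<bullet> (-v) \<le> uf_upper \<Omega> (-v)" by (rule upper_bound[OF assms]) (use v in simp)
  ultimately show "uf_lower \<Omega> v \<le> x \<bullet> v \<and> x \<bullet> v \<le> uf_upper \<Omega> v"
    unfolding lower_eq by simp
qed

end
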